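(* Let $F=\begin{pmatrix}0&-1&0\\-1&4&-1\\0&-1&0\end{pmatrix}$ (edge detect B filter). Then for all $m,n\in\mathbb{N}$, it is not the case that the equation $F*X=B$ with the reflexive boundary condition, for unknown $X\in\mathbb{R}^{m\times n}$, has a unique solution for every $B\in\mathbb{R}^{m\times n}$.
   Context: For $F=[f_{ij}]\in\mathbb{R}^{3\times3}$ and $X=[x_{ij}]\in\mathbb{R}^{m\times n}$, the convolution $F*X\in\mathbb{R}^{m\times n}$ is defined by $[F*X]_{ij}=\sum_{l_1=1}^3\sum_{l_2=1}^3 f_{l_1l_2}\,x_{i-l_1+2,\,j-l_2+2}$ for $1\le i\le m$, $1\le j\le n$, where the reflexive boundary condition sets $x_{0j}=x_{1j}$, $x_{m+1,j}=x_{mj}$, $x_{i0}=x_{i1}$, $x_{i,n+1}=x_{in}$ (for all indices $i\in\{0,\dots,m+1\}$, $j\in\{0,\dots,n+1\}$, so corners are also determined, e.g. $x_{00}=x_{11}$). *)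

theory Defs
  imports Main "HOL.Real"
begin

text \<open>An m x n real matrix is represented as a function nat => nat => real
  whose entries are indexed by 1..m and 1..n and which vanishes elsewhere.\<close>
definition mat_space :: "nat \<Rightarrow> nat \<Rightarrow> (nat \<Rightarrow> nat \<Rightarrow> real) set" where
  "mat_space m n = {X. \<forall>i j. \<not> (1 \<le> i \<and> i \<le> m \<and> 1 \<le> j \<and> j \<le> n) \<longrightarrow> X i j = 0}"

text \<open>Reflexive boundary extension: x_{0j} = x_{1j}, x_{m+1,j} = x_{mj}, etc.
  (for indices 0..m+1 and 0..n+1, clamping to the range).\<close>
definition refl_ext :: "nat \<Rightarrow> nat \<Rightarrow> (nat \<Rightarrow> nat \<Rightarrow> real) \<Rightarrow> nat \<Rightarrow> nat \<Rightarrow> real" where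
  "refl_ext m n X i j = X (min (max i 1) m) (min (max j 1) n)"

definition conv_refl :: "(nat \<Rightarrow> nat \<Rightarrow> real) \<Rightarrow> nat \<Rightarrow> nat \<Rightarrow> (nat \<Rightarrow> nat \<Rightarrow> real) \<Rightarrow> nat \<Rightarrow> nat \<Rightarrow> real" where
  "conv_refl f m n X i j =
     (if 1 \<le> i \<and> i \<le> m \<and> 1 \<le> j \<and> j \<le> n then
        (\<Sum>l1\<in>{1..3}. \<Sum>l2\<in>{1..3}. f l1 l2 * refl_ext m n X (i + 2 - l1) (j + 2 - l2))
      else 0)"

definition filter_of :: "real list list \<Rightarrow> nat \<Rightarrow> nat \<Rightarrow> real" where
  "filter_of F l1 l2 = F ! (l1 - 1) ! (l2 - 1)"

definition edge_detect_B :: "nat \<Rightarrow> nat \<Rightarrow> real" where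
  "edge_detect_B = filter_of [[0, -1, 0], [-1, 4, -1], [0, -1, 0]]"

end

theory Submission
  imports Defs
begin

lemma filter_sum: "(\<Sum>l1\<in>{1..3::nat}. \<Sum>l2\<in>{1..3::nat}. edge_detect_B l1 l2) = 0"
proof -
  have e: "{1..3::nat} = {1,2,3}" by auto
  show ?thesis unfolding e by (simp add: edge_detect_B_def filter_of_def)
qed

theorem corollary12:
  fixes m n :: nat
  assumes "1 \<le> m" and "1 \<le> n"
  shows "\<not> (\<forall>B \<in> mat_space m n. \<exists>!X. X \<in> mat_space m n \<and> conv_refl edge_detect_B m n X = B)"
proof
  assume H: "\<forall>B \<in> mat_space m n. \<exists>!X. X \<in> mat_space m n \<and> conv_refl edge_detect_B m n X = B"
  define C :: "nat \<Rightarrow> nat \<Rightarrow> real" where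
    "C = (\<lambda>i j. if 1 \<le> i \<and> i \<le> m \<and> 1 \<le> j \<and> j \<le> n then 1 else 0)"
  have Z: "(\<lambda>i j. 0::real) \<in> mat_space m n" by (simp add: mat_space_def)
  have CM: "C \<in> mat_space m n" by (simp add: mat_space_def C_def)
  have R: "refl_ext m n C a b = 1" for a b
    using assms by (simp add: refl_ext_def C_def)
  have CC: "conv_refl edge_detect_B m n C = (\<lambda>i j. 0)"
    by (rule ext, rule ext) (use filter_sum in \<open>simp add: conv_refl_def R\<close>)
  have C0: "conv_refl edge_detect_B m n (\<lambda>i j. 0) = (\<lambda>i j. 0)"
    by (rule ext, rule ext) (simp add: conv_refl_def refl_ext_def)
  have "C \<noteq> (\<lambda>i j. 0)"
  proof
    assume "C = (\<lambda>i j. 0)"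
    hence "C 1 1 = 0" by simp
    thus False using assms by (simp add: C_def)
  qed
  moreover have "\<exists>!X. X \<in> mat_space m n \<and> conv_refl edge_detect_B m n X = (\<lambda>i j. 0)"
    using H Z by blast
  ultimately show False using CM CC C0 Z by blast
qed

end
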